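(* Let $H$ be an $n\times n$ matrix with all entries of absolute value $1$, pairwise orthogonal rows $R_0,\dots,R_{n-1}$, and $R_0$ the all-ones vector. Suppose that for all $a,b$ the vector $R_a\circ R_b$ is non-orthogonal to exactly one of the vectors $R_0,\dots,R_{n-1}$. Then there exist a finite Abelian group $G$ of order $n$ and a bijection $\varphi:\{0,\dots,n-1\}\to G$ such that the map $\{i,j\}\mapsto\{\varphi(i),\varphi(j)\}$ is a graph isomorphism from $L(H)$ onto the L-graph of the Fourier matrix of $G$.
   Context: For a square complex matrix $C$ with rows $(c_i)_{i\in I}$, its L-graph $L(C)$ is the simple graph on the set of 2-element multisets $\{i,j\}$ of row indices ($i=j$ allowed), distinct vertices $\{i,j\}$, $\{k,l\}$ being adjacent iff $\langle c_i\circ c_j|c_k\circ c_l\rangle=0$; $\circ$ is the entrywise product, $\langle x|y\rangle=\sum_t\overline{x_t}y_t$. The Fourier matrix of $G=\mathbb{Z}_{d_1}\times\cdots\times\mathbb{Z}_{d_m}$ is $(\chi_j(i))_{i,j\in G}$ with $\chi_a(b)=\exp(\sum_j\frac{2\pi i}{d_j}a_jb_j)$. *)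

theory Defs
  imports Complex_Main "HOL-Library.Multiset"
begin

definition cinner :: "'t set \<Rightarrow> ('t \<Rightarrow> complex) \<Rightarrow> ('t \<Rightarrow> complex) \<Rightarrow> complex" where
  "cinner T x y = (\<Sum>t\<in>T. cnj (x t) * y t)"

definition rowprod :: "('i \<Rightarrow> 't \<Rightarrow> complex) \<Rightarrow> 'i multiset \<Rightarrow> 't \<Rightarrow> complex" where
  "rowprod c M t = prod_mset (image_mset (\<lambda>i. c i t) M)"

text \<open>Vertices of the L-graph: 2-element multisets of row indices (i = j allowed).\<close>
definition Lverts :: "'i set \<Rightarrow> 'i multiset set" where
  "Lverts I = {M. size M = 2 \<and> set_mset M \<subseteq> I}"

definition Ladj :: "'t set \<Rightarrow> ('i \<Rightarrow> 't \<Rightarrow> complex) \<Rightarrow> 'i multiset \<Rightarrow> 'i multiset \<Rightarrow> bool" where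
  "Ladj T c M N \<longleftrightarrow> M \<noteq> N \<and> cinner T (rowprod c M) (rowprod c N) = 0"

definition Lgraph_iso ::
  "'i set \<Rightarrow> 't set \<Rightarrow> ('i \<Rightarrow> 't \<Rightarrow> complex) \<Rightarrow>
   'j set \<Rightarrow> 's set \<Rightarrow> ('j \<Rightarrow> 's \<Rightarrow> complex) \<Rightarrow>
   ('i multiset \<Rightarrow> 'j multiset) \<Rightarrow> bool" where
  "Lgraph_iso I T c J S d f \<longleftrightarrow>
     bij_betw f (Lverts I) (Lverts J) \<and>
     (\<forall>M\<in>Lverts I. \<forall>N\<in>Lverts I. Ladj T c M N \<longleftrightarrow> Ladj S d (f M) (f N))"

text \<open>The group Z_{d_1} x ... x Z_{d_m}, elements represented as lists of residues.\<close>
definition cyc_prod :: "nat list \<Rightarrow> nat list set" where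
  "cyc_prod ds = {x. length x = length ds \<and> (\<forall>j<length ds. x ! j < ds ! j)}"

definition fchar :: "nat list \<Rightarrow> nat list \<Rightarrow> nat list \<Rightarrow> complex" where
  "fchar ds a b = exp (\<Sum>j<length ds. 2 * of_real pi * \<i> * of_nat (a ! j) * of_nat (b ! j) / of_nat (ds ! j))"

definition fourier :: "nat list \<Rightarrow> nat list \<Rightarrow> nat list \<Rightarrow> complex" where
  "fourier ds i j = fchar ds j i"

end

theory Submission
  imports Defs "HOL-Algebra.Multiplicative_Group" "Jordan_Normal_Form.Determinant"
begin

lemma lcm_drop_coprime_factor:
  fixes a b q :: nat
  assumes "q dvd a" "coprime q b"
  shows "lcm a (q * b) = lcm a b"
proof (rule dvd_antisym)
  show "lcm a (q * b) dvd lcm a b"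
    using assms by (meson divides_mult dvd_lcm1 dvd_lcm2 dvd_trans lcm_least)
  show "lcm a b dvd lcm a (q * b)"
    by (meson dvd_lcm1 dvd_lcm2 dvd_mult_left dvd_trans lcm_least dvd_triv_right)
qed

lemma lcm_split:
  fixes a b :: nat
  assumes "0 < a" "0 < b"
  shows "\<exists>a' b'. a' dvd a \<and> b' dvd b \<and> coprime a' b' \<and> a' * b' = lcm a b"
  using assms
proof (induction "a+b" arbitrary: a b rule: less_induct)
  case less
  show ?case
  proof (cases "coprime a b")
    case True
    then show ?thesis by (intro exI[of _ a] exI[of _ b]) (simp add: lcm_coprime)
  next
    case False
    then have "gcd a b \<noteq> 1" by (simp add: coprime_iff_gcd_eq_1)
    then obtain p where p: "prime p" "p dvd gcd a b" using prime_factor_nat by blast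
    have pa: "p dvd a" and pb: "p dvd b" using p by auto
    define i where "i = multiplicity p a"
    define j where "j = multiplicity p b"
    define a0 where "a0 = a div p^i"
    define b0 where "b0 = b div p^j"
    have nu: "\<not> is_unit p" using p(1) not_prime_unit by blast
    have "p^i dvd a" unfolding i_def by (rule multiplicity_dvd)
    then have a0: "a = p^i * a0" unfolding a0_def by (rule dvd_mult_div_cancel[symmetric])
    have "p^j dvd b" unfolding j_def by (rule multiplicity_dvd)
    then have b0: "b = p^j * b0" unfolding b0_def by (rule dvd_mult_div_cancel[symmetric])
    have na0: "\<not> p dvd a0" unfolding a0_def i_def using multiplicity_decompose[OF _ nu] less.prems by simp
    have nb0: "\<not> p dvd b0" unfolding b0_def j_def using multiplicity_decompose[OF _ nu] less.prems by simp
    have ca0: "coprime (p^i) a0" using prime_imp_coprime[OF p(1) na0] by simp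
    have cb0: "coprime (p^j) b0" using prime_imp_coprime[OF p(1) nb0] by simp
    have p2: "p \<ge> 2" using p(1) prime_ge_2_nat by blast
    show ?thesis
    proof (cases "j \<le> i")
      case True
      have "j \<noteq> 0" using b0 pb nb0 by (cases j) auto
      then have pj: "1 < p^j" using p2 by (intro one_less_power) auto
      have "0 < b0" using b0 less.prems by (cases b0) auto
      moreover have "b0 < b" using b0 mult_less_mono1[OF pj \<open>0 < b0\<close>] by simp
      ultimately obtain a' b' where ab: "a' dvd a" "b' dvd b0" "coprime a' b'" "a' * b' = lcm a b0"
        using less.hyps[of a b0] less.prems by auto
      have "p^j dvd a" using True a0 by (metis dvd_mult2 le_imp_power_dvd)
      then have "lcm a b = lcm a b0" using b0 lcm_drop_coprime_factor cb0 by metis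
      moreover have "b' dvd b" using ab(2) b0 by (simp add: dvd_mult)
      ultimately show ?thesis using ab by metis
    next
      case False
      have "i \<noteq> 0" using a0 pa na0 by (cases i) auto
      then have pi: "1 < p^i" using p2 by (intro one_less_power) auto
      have "0 < a0" using a0 less.prems by (cases a0) auto
      moreover have "a0 < a" using a0 mult_less_mono1[OF pi \<open>0 < a0\<close>] by simp
      ultimately obtain a' b' where ab: "a' dvd a0" "b' dvd b" "coprime a' b'" "a' * b' = lcm a0 b"
        using less.hyps[of a0 b] less.prems by auto
      have "p^i dvd b" using False b0 by (metis dvd_mult2 le_imp_power_dvd nat_le_linear)
      then have "lcm b a = lcm b a0" using a0 lcm_drop_coprime_factor ca0 by metis
      moreover have "a' dvd a" using ab(1) a0 by (simp add: dvd_mult)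
      ultimately show ?thesis using ab by (metis lcm.commute)
    qed
  qed
qed

fun ev :: "('a,'b) monoid_scheme \<Rightarrow> 'a list \<Rightarrow> nat list \<Rightarrow> 'a" where
  "ev M [] xs = \<one>\<^bsub>M\<^esub>"
| "ev M (g#gs) xs = g [^]\<^bsub>M\<^esub> (hd xs :: nat) \<otimes>\<^bsub>M\<^esub> ev M gs (tl xs)"

fun addv :: "nat list \<Rightarrow> nat list \<Rightarrow> nat list \<Rightarrow> nat list" where
  "addv [] xs ys = []"
| "addv (d#ds) xs ys = ((hd xs + hd ys) mod d) # addv ds (tl xs) (tl ys)"

lemma cyc_prod_Nil: "cyc_prod [] = {[]}"
  by (auto simp: cyc_prod_def)

lemma cyc_prod_Cons: "cyc_prod (d#ds) = {x#xs | x xs. x < d \<and> xs \<in> cyc_prod ds}"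
proof (intro equalityI subsetI)
  fix z assume "z \<in> cyc_prod (d#ds)"
  then have z: "length z = Suc (length ds)" "\<forall>j<Suc (length ds). z ! j < (d#ds) ! j"
    by (auto simp: cyc_prod_def)
  then obtain x xs where zx: "z = x # xs" by (cases z) auto
  have "x < d" using z(2) zx by auto
  moreover have "xs \<in> cyc_prod ds" using z zx by (auto simp: cyc_prod_def)
  ultimately show "z \<in> {x#xs | x xs. x < d \<and> xs \<in> cyc_prod ds}" using zx by auto
next
  fix z assume "z \<in> {x#xs | x xs. x < d \<and> xs \<in> cyc_prod ds}"
  then obtain x xs where zx: "z = x # xs" "x < d" "xs \<in> cyc_prod ds" by auto
  then show "z \<in> cyc_prod (d#ds)"
    by (auto simp: cyc_prod_def less_Suc_eq_0_disj)
qed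

lemma length_addv: "length (addv ds xs ys) = length ds"
  by (induction ds arbitrary: xs ys) auto

lemma nth_addv: "k < length ds \<Longrightarrow> length xs = length ds \<Longrightarrow> length ys = length ds \<Longrightarrow>
   addv ds xs ys ! k = (xs ! k + ys ! k) mod ds ! k"
proof (induction ds arbitrary: xs ys k)
  case Nil then show ?case by simp
next
  case (Cons d ds)
  then obtain x xs' y ys' where "xs = x # xs'" "ys = y # ys'"
    by (metis length_Suc_conv)
  with Cons show ?case by (cases k) auto
qed

lemma addv_in: "\<forall>d\<in>set ds. 0 < d \<Longrightarrow> addv ds xs ys \<in> cyc_prod ds"
proof (induction ds arbitrary: xs ys)
  case Nil then show ?case by (simp add: cyc_prod_Nil)
next
  case (Cons d ds)
  then show ?case by (simp add: cyc_prod_Cons)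
qed

context comm_group
begin

lemma sub_pow_closed: "subgroup S G \<Longrightarrow> x \<in> S \<Longrightarrow> x [^] (n::nat) \<in> S"
  by (induction n) (auto intro: subgroup.one_closed subgroup.m_closed)

lemma pow_mod_ord: "x \<in> carrier G \<Longrightarrow> x [^] (a mod ord x) = x [^] (a::nat)"
proof -
  assume x: "x \<in> carrier G"
  have "x [^] (ord x * (a div ord x)) \<otimes> x [^] (a mod ord x) = x [^] (ord x * (a div ord x) + a mod ord x)"
    using x by (rule nat_pow_mult)
  then have "x [^] a = x [^] (ord x * (a div ord x)) \<otimes> x [^] (a mod ord x)" by simp
  moreover have "x [^] (ord x * (a div ord x)) = \<one>" using x by (simp add: pow_eq_id)
  ultimately show ?thesis using x by simp
qed

lemma inv_pow_eq:
  assumes fin: "finite (carrier G)" and x: "x \<in> carrier G"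
  shows "inv (x [^] (r::nat)) = x [^] (r * (ord x - 1))"
proof (rule inv_equality)
  have o: "ord x \<ge> 1" using ord_ge_1[OF fin x] .
  have "x [^] (r * (ord x - 1)) \<otimes> x [^] r = x [^] (r * (ord x - 1) + r)"
    using x by (simp add: nat_pow_mult)
  also have "r * (ord x - 1) + r = r * ord x" using o
    by (metis add.commute le_add_diff_inverse mult.commute mult_Suc plus_1_eq_Suc)
  also have "x [^] (r * ord x) = \<one>" using x by (simp add: pow_eq_id)
  finally show "x [^] (r * (ord x - 1)) \<otimes> x [^] r = \<one>" .
qed (use x in auto)

lemma ord_mult_coprime:
  assumes x: "x \<in> carrier G" and y: "y \<in> carrier G" and c: "coprime (ord x) (ord y)"
  shows "ord (x \<otimes> y) = ord x * ord y"
proof (rule dvd_antisym)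
  show "ord (x \<otimes> y) dvd ord x * ord y" using abelian_ord_mul_divides x y by blast
  define N where "N = ord (x \<otimes> y)"
  have e: "x [^] N \<otimes> y [^] N = \<one>"
    using nat_pow_distrib[OF x y, of N] pow_ord_eq_1[of "x \<otimes> y"] x y by (simp add: N_def)
  have y1: "y [^] (N * ord y) = \<one>" using y by (simp add: pow_eq_id)
  have x1: "x [^] (N * ord x) = \<one>" using x by (simp add: pow_eq_id)
  have "(x [^] N \<otimes> y [^] N) [^] ord y = \<one>" using e by simp
  then have "x [^] (N * ord y) = \<one>"
    using x y y1 by (simp add: nat_pow_distrib nat_pow_pow)
  then have "ord x dvd N * ord y" using x pow_eq_id by blast
  then have dx: "ord x dvd N" using c coprime_dvd_mult_left_iff by blast
  have "(x [^] N \<otimes> y [^] N) [^] ord x = \<one>" using e by simp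
  then have "y [^] (N * ord x) = \<one>"
    using x y x1 by (simp add: nat_pow_distrib nat_pow_pow)
  then have "ord y dvd N * ord x" using y pow_eq_id by blast
  then have dy: "ord y dvd N" using c coprime_dvd_mult_left_iff coprime_commute by blast
  show "ord x * ord y dvd N" using divides_mult[OF dx dy c] .
qed

lemma max_ord:
  assumes fin: "finite (carrier G)" and S: "subgroup S G"
  shows "\<exists>g\<in>S. \<forall>x\<in>S. ord x dvd ord g"
proof -
  have Sc: "S \<subseteq> carrier G" using S subgroup.subset by blast
  have finS: "finite S" using fin Sc finite_subset by blast
  have "\<one> \<in> S" using S subgroup.one_closed by blast
  then have ne: "ord ` S \<noteq> {}" by blast
  have "Max (ord ` S) \<in> ord ` S" using Max_in[OF finite_imageI[OF finS, of ord] ne] .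
  then obtain g where g: "g \<in> S" "ord g = Max (ord ` S)"
    by (metis imageE)
  have gmax: "ord x \<le> ord g" if "x \<in> S" for x
    using Max_ge[OF finite_imageI[OF finS, of ord], of "ord x"] that g(2) by simp
  have gc: "g \<in> carrier G" using g Sc by blast
  show ?thesis
  proof (intro bexI[OF _ g(1)] ballI)
    fix x assume xS: "x \<in> S"
    have xc: "x \<in> carrier G" using xS Sc by blast
    have a0: "0 < ord x" using ord_ge_1[OF fin xc] by simp
    have b0: "0 < ord g" using ord_ge_1[OF fin gc] by simp
    obtain a' b' where ab: "a' dvd ord x" "b' dvd ord g" "coprime a' b'" "a' * b' = lcm (ord x) (ord g)"
      using lcm_split[OF a0 b0] by blast
    have lpos: "0 < lcm (ord x) (ord g)" using a0 b0 by (simp add: lcm_pos_nat)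
    obtain ka where ka: "ord x = a' * ka" using ab(1) by (auto elim: dvdE)
    obtain kb where kb: "ord g = b' * kb" using ab(2) by (auto elim: dvdE)
    have a'0: "0 < a'" using ka a0 by (cases a') auto
    have b'0: "0 < b'" using kb b0 by (cases b') auto
    have ka0: "ka \<noteq> 0" using ka a0 by auto
    have kb0: "kb \<noteq> 0" using kb b0 by auto
    have kad: "ka dvd ord x" using ka by simp
    have kbd: "kb dvd ord g" using kb by simp
    define u where "u = x [^] ka"
    define v where "v = g [^] kb"
    have "ord u = ord x div ka" unfolding u_def using ord_pow[OF xc kad ka0] .
    also have "\<dots> = a'" using ka ka0 by simp
    finally have ou: "ord u = a'" .
    have "ord v = ord g div kb" unfolding v_def using ord_pow[OF gc kbd kb0] .
    also have "\<dots> = b'" using kb kb0 by simp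
    finally have ov: "ord v = b'" .
    have uS: "u \<in> S" unfolding u_def using sub_pow_closed[OF S xS] .
    have vS: "v \<in> S" unfolding v_def using sub_pow_closed[OF S g(1)] .
    have uc: "u \<in> carrier G" "v \<in> carrier G" using uS vS Sc by auto
    have "ord (u \<otimes> v) = a' * b'" using ord_mult_coprime[OF uc] ou ov ab(3) by simp
    moreover have "u \<otimes> v \<in> S" using subgroup.m_closed[OF S uS vS] .
    ultimately have "lcm (ord x) (ord g) \<le> ord g" using gmax[of "u \<otimes> v"] ab(4) by simp
    moreover have "ord g \<le> lcm (ord x) (ord g)" using lpos by (simp add: dvd_imp_le)
    ultimately have "lcm (ord x) (ord g) = ord g" by simp
    then show "ord x dvd ord g" using dvd_lcm1[of "ord x" "ord g"] by simp
  qed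
qed

end

context comm_group
begin

lemma pow1: "x \<in> carrier G \<Longrightarrow> x [^] (1::nat) = x"
  by simp

lemma complement:
  assumes fin: "finite (carrier G)" and S: "subgroup S G" and g: "g \<in> S"
    and maxo: "\<forall>x\<in>S. ord x dvd ord g"
  shows "\<exists>H. subgroup H G \<and> H \<subseteq> S \<and> (\<forall>a::nat. g [^] a \<in> H \<longrightarrow> g [^] a = \<one>)
            \<and> (\<forall>x\<in>S. \<exists>a::nat. \<exists>h\<in>H. x = g [^] a \<otimes> h)"
proof -
  have Sc: "S \<subseteq> carrier G" using S subgroup.subset by blast
  have gc: "g \<in> carrier G" using g Sc by blast
  define F where "F = {H. subgroup H G \<and> H \<subseteq> S \<and> (\<forall>a::nat. g [^] a \<in> H \<longrightarrow> g [^] a = \<one>)}"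
  have "{\<one>} \<in> F" unfolding F_def using triv_subgroup subgroup.one_closed[OF S] by auto
  then have Fne: "card ` F \<noteq> {}" by blast
  have "F \<subseteq> Pow (carrier G)" unfolding F_def using subgroup.subset by blast
  moreover have "finite (Pow (carrier G))" using fin by simp
  ultimately have finF: "finite F" by (rule finite_subset)
  obtain H where H: "H \<in> F" "card H = Max (card ` F)"
    using Max_in[OF finite_imageI[OF finF] Fne] by auto
  have Hmax: "card H' \<le> card H" if "H' \<in> F" for H'
    using Max_ge[OF finite_imageI[OF finF, of card], of "card H'"] that H(2) by simp
  have Hs: "subgroup H G" and HS: "H \<subseteq> S" and Hg: "\<And>a::nat. g [^] a \<in> H \<Longrightarrow> g [^] a = \<one>"
    using H(1) unfolding F_def by auto
  have Hc: "H \<subseteq> carrier G" using Hs subgroup.subset by blast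
  define K where "K = {z. \<exists>a::nat. \<exists>h\<in>H. z = g [^] a \<otimes> h}"
  have K_car: "K \<subseteq> carrier G" unfolding K_def using gc Hc by auto
  have K_S: "K \<subseteq> S"
  proof
    fix z assume "z \<in> K"
    then obtain a h where z: "z = g [^] (a::nat) \<otimes> h" "h \<in> H" unfolding K_def by blast
    show "z \<in> S" unfolding z(1) using subgroup.m_closed[OF S sub_pow_closed[OF S g] subsetD[OF HS z(2)]] .
  qed
  have H_K: "H \<subseteq> K"
  proof
    fix h assume "h \<in> H"
    then have "h = g [^] (0::nat) \<otimes> h" using Hc by auto
    then show "h \<in> K" unfolding K_def using \<open>h \<in> H\<close> by blast
  qed
  have gK: "g [^] (a::nat) \<in> K" for a
  proof -
    have "g [^] a = g [^] a \<otimes> \<one>" using gc by simp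
    then show ?thesis unfolding K_def using Hs subgroup.one_closed by blast
  qed
  have K_mult: "z \<otimes> w \<in> K" if zwK: "z \<in> K" "w \<in> K" for z w
  proof -
    obtain a h b h' where zw: "z = g [^] (a::nat) \<otimes> h" "h \<in> H" "w = g [^] (b::nat) \<otimes> h'" "h' \<in> H"
      using zwK unfolding K_def by blast
    have hc: "h \<in> carrier G" "h' \<in> carrier G" using zw Hc by auto
    have "z \<otimes> w = (g [^] a \<otimes> g [^] b) \<otimes> (h \<otimes> h')"
      using zw hc gc by (simp add: m_ac)
    also have "\<dots> = g [^] (a + b) \<otimes> (h \<otimes> h')" using gc by (simp add: nat_pow_mult)
    finally show ?thesis unfolding K_def using subgroup.m_closed[OF Hs zw(2) zw(4)] by blast
  qed
  have K_inv: "inv z \<in> K" if zK: "z \<in> K" for z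
  proof -
    obtain a h where zw: "z = g [^] (a::nat) \<otimes> h" "h \<in> H"
      using zK unfolding K_def by blast
    have hc: "h \<in> carrier G" using zw Hc by auto
    have "inv z = inv (g [^] a) \<otimes> inv h" using zw hc gc by (simp add: inv_mult)
    also have "\<dots> = g [^] (a * (ord g - 1)) \<otimes> inv h" using inv_pow_eq[OF fin gc] by simp
    finally show ?thesis unfolding K_def using subgroup.m_inv_closed[OF Hs zw(2)] by blast
  qed
  have K_pow: "z [^] (n::nat) \<in> K" if zK: "z \<in> K" for z n
  proof (induction n)
    case 0 then show ?case using gK[of 0] by simp
  next
    case (Suc n) then show ?case using K_mult zK by simp
  qed
  have "S \<subseteq> K"
  proof
    fix x assume xS: "x \<in> S"
    show "x \<in> K"
    proof (rule ccontr)
      assume xK: "x \<notin> K"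
      have xc: "x \<in> carrier G" using xS Sc by blast
      have ex: "\<exists>k. 0 < k \<and> x [^] (k::nat) \<in> K"
        using ord_ge_1[OF fin xc] gK[of 0] xc by (intro exI[of _ "ord x"]) simp
      define k where "k = (LEAST k. 0 < k \<and> x [^] (k::nat) \<in> K)"
      have k: "0 < k" "x [^] k \<in> K" using LeastI_ex[OF ex] unfolding k_def by auto
      have kmin: "\<And>j. 0 < j \<Longrightarrow> j < k \<Longrightarrow> x [^] j \<notin> K"
        unfolding k_def using not_less_Least by blast
      have "k \<noteq> 1" using k xK xc by auto
      then obtain p where p: "prime p" "p dvd k" using prime_factor_nat by blast
      have p2: "2 \<le> p" using p(1) prime_ge_2_nat by blast
      obtain kp where kp: "k = p * kp" using p(2) by (auto elim: dvdE)
      have kp0: "0 < kp" using kp k(1) by (cases kp) auto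
      have kpk: "kp < k" using kp kp0 p2 by simp
      define x1 where "x1 = x [^] kp"
      have x1S: "x1 \<in> S" unfolding x1_def using sub_pow_closed[OF S xS] .
      have x1c: "x1 \<in> carrier G" using x1S Sc by blast
      have x1K: "x1 \<notin> K" unfolding x1_def using kmin kp0 kpk by blast
      have x1p: "x1 [^] p \<in> K" unfolding x1_def using k(2) kp xc
        by (simp add: nat_pow_pow mult.commute)
      have pdo: "p dvd ord x1"
      proof (rule ccontr)
        assume "\<not> p dvd ord x1"
        then have cop: "coprime p (ord x1)" using prime_imp_coprime p(1) by blast
        obtain s y where sy: "p * s = ord x1 * y + gcd p (ord x1)"
          using bezout_nat[of p "ord x1"] p2 by auto
        then have sy': "p * s = ord x1 * y + 1" using cop by simp
        have "x1 [^] (p * s) = (x1 [^] ord x1) [^] y \<otimes> x1"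
          using x1c by (simp add: sy' nat_pow_pow nat_pow_mult[symmetric] pow_eq_id)
        also have "\<dots> = x1" using x1c by simp
        finally have "x1 = (x1 [^] p) [^] s" using x1c by (simp add: nat_pow_pow)
        then have "x1 \<in> K" using K_pow x1p by metis
        then show False using x1K by blast
      qed
      define m where "m = ord g"
      have m0: "0 < m" using ord_ge_1[OF fin gc] m_def by simp
      have pm: "p dvd m" using pdo maxo x1S m_def dvd_trans by blast
      obtain q where q: "m = p * q" using pm by (auto elim: dvdE)
      have q0: "0 < q" using q m0 by (cases q) auto
      obtain t h where th: "x1 [^] p = g [^] (t::nat) \<otimes> h" "h \<in> H"
        using x1p unfolding K_def by blast
      have hc: "h \<in> carrier G" using th Hc by blast
      have "x1 [^] m = \<one>" using pow_eq_id[OF x1c] maxo x1S m_def by blast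
      moreover have "x1 [^] m = (g [^] t \<otimes> h) [^] q"
        using x1c q th(1) by (simp add: nat_pow_pow[symmetric])
      moreover have "(g [^] t \<otimes> h) [^] q = g [^] (t * q) \<otimes> h [^] q"
        using gc hc by (simp add: nat_pow_distrib nat_pow_pow)
      ultimately have e1: "g [^] (t * q) \<otimes> h [^] q = \<one>" by simp
      have "inv (h [^] q) = g [^] (t * q)"
        using inv_equality[OF e1] gc hc by simp
      moreover have "inv (h [^] q) \<in> H" using subgroup.m_inv_closed[OF Hs sub_pow_closed[OF Hs th(2)]] .
      ultimately have "g [^] (t * q) = \<one>" using Hg by metis
      then have "m dvd t * q" using pow_eq_id[OF gc] m_def by simp
      then have "p dvd t" using q q0 by simp
      then obtain t' where t': "t = p * t'" by (auto elim: dvdE)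
      define y where "y = x1 \<otimes> inv (g [^] t')"
      have yS: "y \<in> S" unfolding y_def
        using subgroup.m_closed[OF S x1S subgroup.m_inv_closed[OF S sub_pow_closed[OF S g]]] .
      have yc: "y \<in> carrier G" using yS Sc by blast
      have yp: "y [^] p = h"
      proof -
        have "y [^] p = x1 [^] p \<otimes> inv (g [^] t)"
          unfolding y_def using x1c gc t'
          by (simp add: nat_pow_distrib nat_pow_inv[symmetric] nat_pow_pow mult.commute)
        also have "\<dots> = h" using th(1) gc hc by (simp add: m_ac)
        finally show ?thesis .
      qed
      have yK: "y \<notin> K"
      proof
        assume "y \<in> K"
        then have "y \<otimes> g [^] t' \<in> K" using K_mult gK by blast
        moreover have "y \<otimes> g [^] t' = x1" unfolding y_def using x1c gc by (simp add: m_assoc)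
        ultimately show False using x1K by simp
      qed
      define H' where "H' = {z. \<exists>h\<in>H. \<exists>r::nat. z = h \<otimes> y [^] r}"
      have H'c: "H' \<subseteq> carrier G" unfolding H'_def using Hc yc by auto
      have H'S: "H' \<subseteq> S"
      proof
        fix z assume "z \<in> H'"
        then obtain h1 r where z: "z = h1 \<otimes> y [^] (r::nat)" "h1 \<in> H" unfolding H'_def by blast
        show "z \<in> S" unfolding z(1) using subgroup.m_closed[OF S subsetD[OF HS z(2)] sub_pow_closed[OF S yS]] .
      qed
      have H's: "subgroup H' G"
      proof (rule subgroupI[OF H'c])
        have "\<one> = \<one> \<otimes> y [^] (0::nat)" by simp
        then show "H' \<noteq> {}" unfolding H'_def using subgroup.one_closed[OF Hs] by blast
      next
        fix z assume "z \<in> H'"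
        then obtain h1 r where z: "z = h1 \<otimes> y [^] (r::nat)" "h1 \<in> H" unfolding H'_def by blast
        have h1c: "h1 \<in> carrier G" using z Hc by blast
        have "inv z = inv h1 \<otimes> y [^] (r * (ord y - 1))"
          using z h1c yc inv_pow_eq[OF fin yc] by (simp add: inv_mult)
        then show "inv z \<in> H'" unfolding H'_def using subgroup.m_inv_closed[OF Hs z(2)] by blast
      next
        fix z w assume "z \<in> H'" "w \<in> H'"
        then obtain h1 r h2 r' where z: "z = h1 \<otimes> y [^] (r::nat)" "h1 \<in> H"
            "w = h2 \<otimes> y [^] (r'::nat)" "h2 \<in> H" unfolding H'_def by blast
        have hc: "h1 \<in> carrier G" "h2 \<in> carrier G" using z Hc by auto
        have "z \<otimes> w = (h1 \<otimes> h2) \<otimes> (y [^] r \<otimes> y [^] r')"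
          using z hc yc by (simp add: m_ac)
        also have "\<dots> = (h1 \<otimes> h2) \<otimes> y [^] (r + r')" using yc by (simp add: nat_pow_mult)
        finally show "z \<otimes> w \<in> H'" unfolding H'_def using subgroup.m_closed[OF Hs z(2) z(4)] by blast
      qed
      have H'g: "g [^] a = \<one>" if ga: "g [^] (a::nat) \<in> H'" for a
      proof -
        obtain h1 r where z: "g [^] a = h1 \<otimes> y [^] (r::nat)" "h1 \<in> H"
          using ga unfolding H'_def by blast
        have h1c: "h1 \<in> carrier G" using z Hc by blast
        show ?thesis
        proof (cases "p dvd r")
          case True
          then obtain r2 where r2: "r = p * r2" by (auto elim: dvdE)
          have "y [^] r = (y [^] p) [^] r2" using yc r2 by (simp add: nat_pow_pow)
          then have "y [^] r = h [^] r2" using yp by simp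
          then have "y [^] r \<in> H" using sub_pow_closed[OF Hs th(2)] by simp
          then have "g [^] a \<in> H" using z subgroup.m_closed[OF Hs] by simp
          then show ?thesis using Hg by blast
        next
          case False
          then have cop: "coprime r p" using prime_imp_coprime p(1) coprime_commute by blast
          have r0: "r \<noteq> 0"
          proof
            assume "r = 0"
            with False show False by simp
          qed
          obtain u v where uv: "r * u = p * v + gcd r p"
            using bezout_nat[OF r0, of p] by auto
          then have uv': "r * u = p * v + 1" using cop by simp
          have "(y [^] p) [^] v = y [^] (p * v)" using yc by (rule nat_pow_pow)
          with yp have ypv: "y [^] (p * v) = h [^] v" by simp
          have "y [^] r = inv h1 \<otimes> g [^] a"
            using z h1c yc gc by (simp add: m_assoc[symmetric])
          moreover have "inv h1 \<in> K" using subsetD[OF H_K subgroup.m_inv_closed[OF Hs z(2)]] .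
          ultimately have "y [^] r \<in> K" using K_mult[OF _ gK[of a]] by simp
          then have "(y [^] r) [^] u \<in> K" using K_pow by blast
          moreover have "(y [^] r) [^] u = h [^] v \<otimes> y"
            using yc ypv uv' by (simp add: nat_pow_pow nat_pow_mult[symmetric])
          ultimately have a1: "h [^] v \<otimes> y \<in> K" by simp
          have hv: "h [^] v \<in> H" using sub_pow_closed[OF Hs th(2)] .
          have "inv (h [^] v) \<otimes> (h [^] v \<otimes> y) \<in> K"
            using K_mult[OF K_inv[OF subsetD[OF H_K hv]] a1] .
          moreover have "inv (h [^] v) \<otimes> (h [^] v \<otimes> y) = y"
            using hc yc by (simp add: m_assoc[symmetric])
          ultimately show ?thesis using yK by simp
        qed
      qed
      have H'F: "H' \<in> F" unfolding F_def using H's H'S H'g by blast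
      have "H \<subseteq> H'"
      proof
        fix h1 assume "h1 \<in> H"
        moreover have "h1 = h1 \<otimes> y [^] (0::nat)" using \<open>h1 \<in> H\<close> Hc by auto
        ultimately show "h1 \<in> H'" unfolding H'_def by blast
      qed
      moreover have "y \<in> H'"
      proof -
        have "y = \<one> \<otimes> y [^] (1::nat)" using yc by simp
        then show ?thesis unfolding H'_def using subgroup.one_closed[OF Hs] by blast
      qed
      moreover have "y \<notin> H" using yK H_K by blast
      ultimately have "H \<subset> H'" by blast
      moreover have "finite H'" using finite_subset[OF H'c fin] .
      ultimately have "card H < card H'" by (simp add: psubset_card_mono)
      then show False using Hmax[OF H'F] by simp
    qed
  qed
  then have "\<forall>x\<in>S. \<exists>a::nat. \<exists>h\<in>H. x = g [^] a \<otimes> h" unfolding K_def by blast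
  then show ?thesis using Hs HS Hg by blast
qed

end

context comm_group
begin

lemma ev_closed: "set gs \<subseteq> carrier G \<Longrightarrow> ev G gs xs \<in> carrier G"
  by (induction gs arbitrary: xs) auto

lemma ev_sub: "subgroup S G \<Longrightarrow> set gs \<subseteq> S \<Longrightarrow> ev G gs xs \<in> S"
proof (induction gs arbitrary: xs)
  case Nil then show ?case using subgroup.one_closed by auto
next
  case (Cons g gs)
  have gS: "g \<in> S" using Cons by simp
  have "ev G gs (tl xs) \<in> S" using Cons by simp
  then show ?case using subgroup.m_closed[OF Cons(2) sub_pow_closed[OF Cons(2) gS]] by simp
qed

lemma ev_add:
  "length gs = length ds \<Longrightarrow> set gs \<subseteq> carrier G \<Longrightarrow> (\<forall>i<length gs. ord (gs!i) = ds!i) \<Longrightarrow>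
   ev G gs (addv ds xs ys) = ev G gs xs \<otimes> ev G gs ys"
proof (induction gs ds arbitrary: xs ys rule: list_induct2)
  case Nil then show ?case by simp
next
  case (Cons g gs d ds)
  have gc: "g \<in> carrier G" and gsc: "set gs \<subseteq> carrier G" using Cons.prems(1) by auto
  have od: "ord g = d" using Cons.prems(2) by force
  have ords: "\<forall>i<length gs. ord (gs!i) = ds!i"
  proof (intro allI impI)
    fix i assume "i < length gs"
    then show "ord (gs!i) = ds!i" using Cons.prems(2)[rule_format, of "Suc i"] by simp
  qed
  have IH: "ev G gs (addv ds (tl xs) (tl ys)) = ev G gs (tl xs) \<otimes> ev G gs (tl ys)"
    using Cons.IH[OF gsc ords] .
  have "g [^] ((hd xs + hd ys) mod d) = g [^] (hd xs + hd ys)"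
    using pow_mod_ord[OF gc] od by simp
  also have "\<dots> = g [^] hd xs \<otimes> g [^] hd ys" using gc by (simp add: nat_pow_mult)
  finally have e: "g [^] ((hd xs + hd ys) mod d) = g [^] hd xs \<otimes> g [^] hd ys" .
  have c1: "ev G gs (tl xs) \<in> carrier G" "ev G gs (tl ys) \<in> carrier G" using ev_closed[OF gsc] by auto
  show ?case using e IH gc c1 by (simp add: m_ac)
qed

lemma structure_thm:
  assumes fin: "finite (carrier G)"
  shows "subgroup S G \<Longrightarrow> \<exists>gs ds. length gs = length ds \<and> set gs \<subseteq> S \<and>
     (\<forall>i<length gs. ord (gs!i) = ds!i) \<and> (\<forall>d\<in>set ds. 0 < d) \<and> bij_betw (ev G gs) (cyc_prod ds) S"
proof (induction "card S" arbitrary: S rule: less_induct)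
  case less
  have S: "subgroup S G" by fact
  have Sc: "S \<subseteq> carrier G" using S subgroup.subset by blast
  have finS: "finite S" using fin Sc finite_subset by blast
  have oneS: "\<one> \<in> S" using S subgroup.one_closed by blast
  show ?case
  proof (cases "S = {\<one>}")
    case True
    have "bij_betw (ev G []) (cyc_prod []) S"
      unfolding True cyc_prod_Nil bij_betw_def by simp
    then show ?thesis by (intro exI[of _ "[]"]) auto
  next
    case False
    obtain g where g: "g \<in> S" and maxo: "\<forall>x\<in>S. ord x dvd ord g"
      using max_ord[OF fin S] by blast
    have gc: "g \<in> carrier G" using g Sc by blast
    obtain x where xS: "x \<in> S" and x1: "x \<noteq> \<one>" using False oneS by blast
    have xc: "x \<in> carrier G" using xS Sc by blast
    have "ord g \<noteq> 1"
    proof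
      assume "ord g = 1"
      then have "ord x = 1" using maxo xS by simp
      then show False using x1 ord_eq_1[OF xc] by simp
    qed
    then have g1: "g \<noteq> \<one>" by auto
    define m where "m = ord g"
    have m0: "0 < m" using ord_ge_1[OF fin gc] m_def by simp
    obtain H where Hs: "subgroup H G" and HS: "H \<subseteq> S"
      and Hg: "\<forall>a::nat. g [^] a \<in> H \<longrightarrow> g [^] a = \<one>"
      and HK: "\<forall>x\<in>S. \<exists>a::nat. \<exists>h\<in>H. x = g [^] a \<otimes> h"
      using complement[OF fin S g maxo] by blast
    have Hc: "H \<subseteq> carrier G" using Hs subgroup.subset by blast
    have "g \<notin> H" using Hg g1 gc by (metis pow1)
    then have "H \<subset> S" using HS g by blast
    then have "card H < card S" using finS psubset_card_mono by blast
    then obtain gs ds where IH: "length gs = length ds" "set gs \<subseteq> H"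
      "\<forall>i<length gs. ord (gs!i) = ds!i" "\<forall>d\<in>set ds. 0 < d" "bij_betw (ev G gs) (cyc_prod ds) H"
      using less.hyps[OF _ Hs] by blast
    have gsc: "set gs \<subseteq> carrier G" using IH(2) Hc by blast
    have evH: "ev G gs xs \<in> carrier G" for xs using ev_closed[OF gsc] .
    have inj: "inj_on (ev G (g#gs)) (cyc_prod (m#ds))"
    proof (rule inj_onI)
      fix u w assume u: "u \<in> cyc_prod (m#ds)" and w: "w \<in> cyc_prod (m#ds)"
        and e: "ev G (g#gs) u = ev G (g#gs) w"
      obtain a as where ua: "u = a # as" "a < m" "as \<in> cyc_prod ds" using u unfolding cyc_prod_Cons by blast
      obtain b bs where wb: "w = b # bs" "b < m" "bs \<in> cyc_prod ds" using w unfolding cyc_prod_Cons by blast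
      define h1 where "h1 = ev G gs as"
      define h2 where "h2 = ev G gs bs"
      have h1H: "h1 \<in> H" using IH(5) ua(3) unfolding h1_def bij_betw_def by blast
      have h2H: "h2 \<in> H" using IH(5) wb(3) unfolding h2_def bij_betw_def by blast
      have h1c: "h1 \<in> carrier G" and h2c: "h2 \<in> carrier G" using h1H h2H Hc by auto
      have e2: "g [^] a \<otimes> h1 = g [^] b \<otimes> h2" using e ua wb h1_def h2_def by simp
      have key: "a = b \<and> h1 = h2" if "a' \<le> b'" "a' < m" "b' < m" "g [^] a' \<otimes> h1' = g [^] b' \<otimes> h2'"
        "h1' \<in> H" "h2' \<in> H" "a' = a \<and> b' = b \<and> h1' = h1 \<and> h2' = h2 \<or> a' = b \<and> b' = a \<and> h1' = h2 \<and> h2' = h1"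
        for a' b' :: nat and h1' h2'
      proof -
        have hc': "h1' \<in> carrier G" "h2' \<in> carrier G" using that(5,6) Hc by auto
        have "g [^] b' = g [^] a' \<otimes> g [^] (b' - a')" using gc that(1) by (simp add: nat_pow_mult)
        then have "g [^] a' \<otimes> h1' = g [^] a' \<otimes> (g [^] (b' - a') \<otimes> h2')"
          using that(4) gc hc' by (simp add: m_assoc)
        then have "h1' = g [^] (b' - a') \<otimes> h2'" using gc hc' by simp
        then have "g [^] (b' - a') = h1' \<otimes> inv h2'" using gc hc' by (simp add: m_assoc)
        moreover have "h1' \<otimes> inv h2' \<in> H" using subgroup.m_closed[OF Hs that(5) subgroup.m_inv_closed[OF Hs that(6)]] .
        ultimately have "g [^] (b' - a') = \<one>" using Hg by metis
        then have "m dvd b' - a'" using pow_eq_id[OF gc] m_def by simp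
        moreover have "b' - a' < m" using that(3) by simp
        ultimately have "b' - a' = 0" by (metis dvd_imp_le gr0I not_le)
        then have "a' = b'" using that(1) by simp
        moreover then have "h1' = h2'" using \<open>h1' = g [^] (b' - a') \<otimes> h2'\<close> hc' by simp
        ultimately show ?thesis using that(7) by auto
      qed
      have "a = b \<and> h1 = h2"
      proof (cases "a \<le> b")
        case True then show ?thesis using key[of a b h1 h2] ua wb e2 h1H h2H by blast
      next
        case False then show ?thesis using key[of b a h2 h1] ua wb e2 h1H h2H by fastforce
      qed
      then have "as = bs" using IH(5) ua(3) wb(3) h1_def h2_def unfolding bij_betw_def inj_on_def by blast
      then show "u = w" using ua wb \<open>a = b \<and> h1 = h2\<close> by simp
    qed
    have img: "ev G (g#gs) ` cyc_prod (m#ds) = S"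
    proof (intro equalityI subsetI)
      fix z assume "z \<in> ev G (g#gs) ` cyc_prod (m#ds)"
      then obtain a as where z: "z = ev G (g#gs) (a#as)" "as \<in> cyc_prod ds"
        unfolding cyc_prod_Cons by blast
      have "ev G gs as \<in> H" using IH(5) z(2) unfolding bij_betw_def by blast
      then have "ev G gs as \<in> S" using HS by blast
      then show "z \<in> S" using z(1) subgroup.m_closed[OF S sub_pow_closed[OF S g]] by simp
    next
      fix z assume zS: "z \<in> S"
      obtain a h where ah: "z = g [^] (a::nat) \<otimes> h" "h \<in> H" using HK zS by blast
      obtain as where as: "as \<in> cyc_prod ds" "h = ev G gs as"
        using IH(5) ah(2) unfolding bij_betw_def by blast
      have "a mod m < m" using m0 by simp
      then have "(a mod m) # as \<in> cyc_prod (m#ds)" using as(1) unfolding cyc_prod_Cons by blast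
      moreover have "ev G (g#gs) ((a mod m) # as) = z"
        using ah as pow_mod_ord[OF gc, of a] m_def by simp
      ultimately show "z \<in> ev G (g#gs) ` cyc_prod (m#ds)" by (metis image_eqI)
    qed
    have ordi: "\<forall>i<length (g#gs). ord ((g#gs)!i) = (m#ds)!i"
    proof (intro allI impI)
      fix i assume "i < length (g#gs)"
      then show "ord ((g#gs)!i) = (m#ds)!i" using IH(3) m_def by (cases i) auto
    qed
    show ?thesis
      apply (rule exI[of _ "g#gs"], rule exI[of _ "m#ds"])
      using IH(1,2,4) HS g m0 ordi inj img unfolding bij_betw_def by auto
  qed
qed

end

lemma cinner_cnj: "cinner T x y = cnj (cinner T y x)"
  unfolding cinner_def by (simp add: mult.commute)

locale hadamard =
  fixes n :: nat and H :: "nat \<Rightarrow> nat \<Rightarrow> complex"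
  assumes n0: "0 < n"
    and unim: "\<forall>a<n. \<forall>t<n. norm (H a t) = 1"
    and orth: "\<forall>a<n. \<forall>b<n. a \<noteq> b \<longrightarrow> cinner {..<n} (H a) (H b) = 0"
    and row0: "\<forall>t<n. H 0 t = 1"
    and uniq: "\<forall>a<n. \<forall>b<n. \<exists>!c. c < n \<and> cinner {..<n} (\<lambda>t. H a t * H b t) (H c) \<noteq> 0"
begin

lemma cnjH: "a < n \<Longrightarrow> t < n \<Longrightarrow> cnj (H a t) * H a t = 1"
proof -
  assume "a < n" "t < n"
  then have "norm (H a t) = 1" using unim by blast
  then have "H a t * cnj (H a t) = 1" using complex_norm_square[of "H a t"] by simp
  then show ?thesis by (simp add: mult.commute)
qed

lemma Hnz: "a < n \<Longrightarrow> t < n \<Longrightarrow> H a t \<noteq> 0"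
  using cnjH by force

lemma inner_H: "a < n \<Longrightarrow> b < n \<Longrightarrow> cinner {..<n} (H a) (H b) = (if a = b then of_nat n else 0)"
  using orth cnjH by (simp add: cinner_def)

lemma columns:
  assumes s: "s < n" and t: "t < n"
  shows "(\<Sum>c<n. cnj (H c s) * H c t) = (if s = t then of_nat n else 0)"
proof -
  define A :: "complex mat" where "A = mat n n (\<lambda>(i,j). H i j)"
  define B :: "complex mat" where "B = mat n n (\<lambda>(i,j). cnj (H j i) / of_nat n)"
  have A: "A \<in> carrier_mat n n" and B: "B \<in> carrier_mat n n" unfolding A_def B_def by auto
  have "A * B = 1\<^sub>m n"
  proof (rule eq_matI)
    fix i j assume ij: "i < dim_row (1\<^sub>m n)" "j < dim_col (1\<^sub>m n)"
    then have ij': "i < n" "j < n" by auto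
    have "(A * B) $$ (i, j) = (\<Sum>k<n. H i k * (cnj (H j k) / of_nat n))"
      using ij' unfolding A_def B_def
      by (simp add: scalar_prod_def lessThan_atLeast0)
    also have "\<dots> = cinner {..<n} (H j) (H i) / of_nat n"
      unfolding cinner_def by (simp add: sum_divide_distrib mult.commute)
    also have "\<dots> = 1\<^sub>m n $$ (i, j)"
      using ij' inner_H[of j i] n0 by auto
    finally show "(A * B) $$ (i, j) = 1\<^sub>m n $$ (i, j)" .
  qed (auto simp: A_def B_def)
  then have BA: "B * A = 1\<^sub>m n" using mat_mult_left_right_inverse[OF A B] by blast
  have "(B * A) $$ (s, t) = (\<Sum>c<n. cnj (H c s) / of_nat n * H c t)"
    using s t unfolding A_def B_def by (simp add: scalar_prod_def lessThan_atLeast0)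
  also have "\<dots> = (\<Sum>c<n. cnj (H c s) * H c t) / of_nat n"
    by (simp add: sum_divide_distrib)
  finally have "(\<Sum>c<n. cnj (H c s) * H c t) / of_nat n = (if s = t then 1 else 0)"
    using BA s t by simp
  then show ?thesis using n0 by (auto split: if_splits simp: field_simps)
qed

lemma expansion:
  assumes t: "t < n"
  shows "of_nat n * v t = (\<Sum>c<n. cinner {..<n} (H c) v * H c t)"
proof -
  have "(\<Sum>c<n. cinner {..<n} (H c) v * H c t) = (\<Sum>c<n. \<Sum>s<n. cnj (H c s) * v s * H c t)"
    unfolding cinner_def by (simp add: sum_distrib_right)
  also have "\<dots> = (\<Sum>s<n. \<Sum>c<n. v s * (cnj (H c s) * H c t))"
    by (subst sum.swap) (simp add: mult_ac)
  also have "\<dots> = (\<Sum>s<n. v s * (if s = t then of_nat n else 0))"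
    by (simp add: sum_distrib_left[symmetric] columns t)
  also have "\<dots> = (\<Sum>s<n. if s = t then v s * of_nat n else 0)" by (rule sum.cong) auto
  also have "\<dots> = of_nat n * v t" using t by (simp add: mult.commute)
  finally show ?thesis by simp
qed

definition mul :: "nat \<Rightarrow> nat \<Rightarrow> nat" where
  "mul a b = (THE c. c < n \<and> cinner {..<n} (\<lambda>t. H a t * H b t) (H c) \<noteq> 0)"

lemma mul_props:
  assumes "a < n" "b < n"
  shows "mul a b < n" "cinner {..<n} (\<lambda>t. H a t * H b t) (H (mul a b)) \<noteq> 0"
    "\<And>c. c < n \<Longrightarrow> c \<noteq> mul a b \<Longrightarrow> cinner {..<n} (\<lambda>t. H a t * H b t) (H c) = 0"
proof -
  have u: "\<exists>!c. c < n \<and> cinner {..<n} (\<lambda>t. H a t * H b t) (H c) \<noteq> 0" using uniq assms by blast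
  have m: "mul a b < n \<and> cinner {..<n} (\<lambda>t. H a t * H b t) (H (mul a b)) \<noteq> 0"
    unfolding mul_def using theI'[OF u] .
  then show "mul a b < n" "cinner {..<n} (\<lambda>t. H a t * H b t) (H (mul a b)) \<noteq> 0" by auto
  fix c assume "c < n" "c \<noteq> mul a b"
  then show "cinner {..<n} (\<lambda>t. H a t * H b t) (H c) = 0" using u m by blast
qed

lemma prod_eq:
  assumes a: "a < n" and b: "b < n"
  shows "\<exists>l. l \<noteq> 0 \<and> (\<forall>t<n. H a t * H b t = l * H (mul a b) t)"
proof -
  define v where "v = (\<lambda>t. H a t * H b t)"
  define m where "m = mul a b"
  have m: "m < n" using mul_props(1)[OF a b] m_def by simp
  have z: "cinner {..<n} (H c) v = 0" if "c < n" "c \<noteq> m" for c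
    using mul_props(3)[OF a b that(1)] that(2) cinner_cnj[of "{..<n}" "H c" v] m_def v_def by simp
  have nz: "cinner {..<n} (H m) v \<noteq> 0"
    using mul_props(2)[OF a b] cinner_cnj[of "{..<n}" "H m" v] m_def v_def by simp
  show ?thesis
  proof (intro exI[of _ "cinner {..<n} (H m) v / of_nat n"] conjI allI impI)
    show "cinner {..<n} (H m) v / of_nat n \<noteq> 0" using nz n0 by simp
    fix t assume t: "t < n"
    have "of_nat n * v t = (\<Sum>c<n. cinner {..<n} (H c) v * H c t)" using expansion[OF t] .
    also have "\<dots> = (\<Sum>c<n. if c = m then cinner {..<n} (H m) v * H m t else 0)"
      by (rule sum.cong) (auto simp: z)
    also have "\<dots> = cinner {..<n} (H m) v * H m t" using m by (simp add: sum.delta)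
    finally show "H a t * H b t = cinner {..<n} (H m) v / of_nat n * H (mul a b) t"
      using n0 m_def v_def by (simp add: field_simps)
  qed
qed

lemma prop_rows:
  assumes c: "c < n" and c': "c' < n" and e: "\<forall>t<n. H c t = l * H c' t"
  shows "c = c'"
proof (rule ccontr)
  assume ne: "c \<noteq> c'"
  have "l \<noteq> 0" using e Hnz[OF c, of 0] n0 by auto
  have "cinner {..<n} (H c') (H c) = (\<Sum>t<n. l * (cnj (H c' t) * H c' t))"
    unfolding cinner_def by (rule sum.cong) (auto simp: e mult_ac)
  also have "\<dots> = l * of_nat n" using cnjH[OF c'] by simp
  finally have "cinner {..<n} (H c') (H c) \<noteq> 0" using \<open>l \<noteq> 0\<close> n0 by simp
  then show False using orth c c' ne by blast
qed

lemma mul_lt: "a < n \<Longrightarrow> b < n \<Longrightarrow> mul a b < n"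
  using mul_props(1) .

lemma mul_comm: "mul a b = mul b a"
  unfolding mul_def by (simp add: mult.commute)

lemma mul_0: assumes b: "b < n" shows "mul 0 b = b"
proof -
  obtain l where l: "l \<noteq> 0" "\<forall>t<n. H 0 t * H b t = l * H (mul 0 b) t"
    using prod_eq[OF n0 b] by blast
  have e: "\<forall>t<n. H b t = l * H (mul 0 b) t" using l row0 by simp
  show ?thesis using prop_rows[OF b mul_lt[OF n0 b] e] by simp
qed

lemma mul_assoc:
  assumes a: "a < n" and b: "b < n" and c: "c < n"
  shows "mul (mul a b) c = mul a (mul b c)"
proof -
  have ab: "mul a b < n" and bc: "mul b c < n" using mul_lt a b c by auto
  obtain l1 where l1: "l1 \<noteq> 0" "\<forall>t<n. H a t * H b t = l1 * H (mul a b) t" using prod_eq[OF a b] by blast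
  obtain l2 where l2: "l2 \<noteq> 0" "\<forall>t<n. H (mul a b) t * H c t = l2 * H (mul (mul a b) c) t" using prod_eq[OF ab c] by blast
  obtain l3 where l3: "l3 \<noteq> 0" "\<forall>t<n. H b t * H c t = l3 * H (mul b c) t" using prod_eq[OF b c] by blast
  obtain l4 where l4: "l4 \<noteq> 0" "\<forall>t<n. H a t * H (mul b c) t = l4 * H (mul a (mul b c)) t" using prod_eq[OF a bc] by blast
  have "\<forall>t<n. H (mul (mul a b) c) t = (l3 * l4 / (l1 * l2)) * H (mul a (mul b c)) t"
  proof (intro allI impI)
    fix t assume t: "t < n"
    have "l1 * l2 * H (mul (mul a b) c) t = l1 * (H (mul a b) t * H c t)" using l2 t by simp
    also have "\<dots> = H a t * H b t * H c t" using l1 t by simp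
    also have "\<dots> = H a t * (l3 * H (mul b c) t)" using l3 t by (simp add: mult.assoc)
    also have "\<dots> = l3 * l4 * H (mul a (mul b c)) t" using l4 t by (simp add: mult_ac)
    finally show "H (mul (mul a b) c) t = (l3 * l4 / (l1 * l2)) * H (mul a (mul b c)) t"
      using l1 l2 by (simp add: field_simps)
  qed
  then show ?thesis using prop_rows mul_lt ab bc a c by blast
qed

lemma mul_cancel:
  assumes a: "a < n" and b: "b < n" and b': "b' < n" and e: "mul a b = mul a b'"
  shows "b = b'"
proof -
  obtain l1 where l1: "l1 \<noteq> 0" "\<forall>t<n. H a t * H b t = l1 * H (mul a b) t" using prod_eq[OF a b] by blast
  obtain l2 where l2: "l2 \<noteq> 0" "\<forall>t<n. H a t * H b' t = l2 * H (mul a b') t" using prod_eq[OF a b'] by blast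
  have "\<forall>t<n. H b t = (l1 / l2) * H b' t"
  proof (intro allI impI)
    fix t assume t: "t < n"
    have "H a t * H b t = (l1 / l2) * (H a t * H b' t)" using l1 l2 t e by simp
    then have "H a t * H b t = H a t * ((l1 / l2) * H b' t)" by (simp add: mult_ac)
    then show "H b t = (l1 / l2) * H b' t" using Hnz[OF a t] mult_cancel_left by blast
  qed
  then show ?thesis using prop_rows[OF b b'] by blast
qed

lemma mul_inv: assumes a: "a < n" shows "\<exists>b<n. mul b a = 0"
proof -
  have "inj_on (mul a) {..<n}" using mul_cancel a by (auto simp: inj_on_def)
  moreover have "mul a ` {..<n} \<subseteq> {..<n}" using mul_lt a by auto
  ultimately have "mul a ` {..<n} = {..<n}" by (simp add: endo_inj_surj)
  then have "0 \<in> mul a ` {..<n}" using n0 by auto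
  then show ?thesis using mul_comm by auto
qed

lemma prod_inner:
  assumes a: "a < n" and b: "b < n" and c: "c < n" and d: "d < n"
  shows "cinner {..<n} (\<lambda>t. H a t * H b t) (\<lambda>t. H c t * H d t) = 0 \<longleftrightarrow> mul a b \<noteq> mul c d"
proof -
  obtain l1 where l1: "l1 \<noteq> 0" "\<forall>t<n. H a t * H b t = l1 * H (mul a b) t" using prod_eq[OF a b] by blast
  obtain l2 where l2: "l2 \<noteq> 0" "\<forall>t<n. H c t * H d t = l2 * H (mul c d) t" using prod_eq[OF c d] by blast
  have "cinner {..<n} (\<lambda>t. H a t * H b t) (\<lambda>t. H c t * H d t)
        = cnj l1 * l2 * cinner {..<n} (H (mul a b)) (H (mul c d))"
    unfolding cinner_def by (simp add: sum_distrib_left l1 l2 mult_ac)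
  also have "\<dots> = cnj l1 * l2 * (if mul a b = mul c d then of_nat n else 0)"
    using inner_H mul_lt a b c d by simp
  finally show ?thesis using l1 l2 n0 by auto
qed

end

definition ee :: "nat \<Rightarrow> nat \<Rightarrow> complex" where
  "ee d a = exp (2 * of_real pi * \<i> * of_nat a / of_nat d)"

lemma ee_add: "ee d (a + b) = ee d a * ee d b"
  unfolding ee_def by (simp add: exp_add[symmetric] add_divide_distrib distrib_left)

lemma ee_dmult: "0 < d \<Longrightarrow> ee d (d * q) = 1"
proof -
  assume d: "0 < d"
  have "2 * of_real pi * \<i> * of_nat (d * q) / of_nat d = of_nat q * (2 * of_real pi * \<i>)"
    using d by (simp add: field_simps)
  then show ?thesis unfolding ee_def by (simp add: exp_of_nat_mult)
qed

lemma ee_mod: "0 < d \<Longrightarrow> ee d (a mod d) = ee d a"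
proof -
  assume d: "0 < d"
  have "ee d a = ee d (d * (a div d) + a mod d)" by simp
  also have "\<dots> = ee d (a mod d)" unfolding ee_add ee_dmult[OF d] by simp
  finally show ?thesis by simp
qed

lemma ee_pow: "ee d (j * c) = ee d c ^ j"
proof (induction j)
  case 0 then show ?case by (simp add: ee_def)
next
  case (Suc j)
  have "ee d (Suc j * c) = ee d c * ee d (j * c)" by (simp add: ee_add[symmetric])
  then show ?case using Suc by simp
qed

lemma ee_cnj_mult: "cnj (ee d a) * ee d a = 1"
proof -
  have "norm (ee d a) = 1" unfolding ee_def by simp
  then show ?thesis using complex_norm_square[of "ee d a"] by (simp add: mult.commute)
qed

lemma ee_cnj: "0 < d \<Longrightarrow> cnj (ee d a) = ee d (a * (d - 1))"
proof -
  assume d: "0 < d"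
  have "ee d a * ee d (a * (d - 1)) = ee d (a * d)"
    using d by (simp add: ee_add[symmetric] algebra_simps)
  also have "\<dots> = 1" using ee_dmult[OF d] by (simp add: mult.commute)
  finally have e: "ee d a * ee d (a * (d - 1)) = 1" .
  have "cnj (ee d a) = cnj (ee d a) * (ee d a * ee d (a * (d - 1)))" using e by simp
  also have "\<dots> = ee d (a * (d - 1))" using ee_cnj_mult[of d a] by (simp add: mult.assoc[symmetric])
  finally show ?thesis .
qed

lemma ee_eq_1: "0 < d \<Longrightarrow> ee d c = 1 \<Longrightarrow> d dvd c"
proof -
  assume d: "0 < d" and e: "ee d c = 1"
  have "ee d c = cis (2 * pi * real c / real d)"
    unfolding ee_def cis_conv_exp by (simp add: mult_ac)
  then have "cos (2 * pi * real c / real d) = 1" using e by (metis cis.simps(1) one_complex.simps(1))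
  then obtain k :: int where k: "2 * pi * real c / real d = real_of_int k * 2 * pi"
    using cos_one_2pi_int by blast
  then have "real c = real_of_int k * real d" using d by (simp add: field_simps)
  then have "int c = k * int d" by (metis of_int_eq_iff of_int_mult of_int_of_nat_eq)
  then have "int d dvd int c" by simp
  then show ?thesis by simp
qed

lemma ee_sum: "0 < d \<Longrightarrow> (\<Sum>j<d. ee d (j * c)) = (if d dvd c then of_nat d else 0)"
proof -
  assume d: "0 < d"
  show ?thesis
  proof (cases "d dvd c")
    case True
    then obtain q where q: "c = d * q" by (auto elim: dvdE)
    have "ee d (j * c) = 1" for j using ee_dmult[OF d, of "j * q"] q by (simp add: mult_ac)
    then show ?thesis using True by simp
  next
    case False
    have w1: "ee d c \<noteq> 1" using ee_eq_1[OF d] False by blast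
    have wd: "ee d c ^ d = 1" using ee_pow[of d d c] ee_dmult[OF d, of c] by simp
    have "(\<Sum>j<d. ee d (j * c)) = (\<Sum>j<d. ee d c ^ j)" by (simp add: ee_pow)
    also have "\<dots> = 0" using sum_gp_strict[of "ee d c" d] w1 wd by simp
    finally show ?thesis using False by simp
  qed
qed

lemma fchar_Cons: "fchar (d#ds) (a#as) (b#bs) = ee d (a * b) * fchar ds as bs"
  unfolding fchar_def ee_def length_Cons sum.lessThan_Suc_shift
  by (simp add: exp_add mult.assoc)

lemma fchar_Nil: "fchar [] as bs = 1"
  unfolding fchar_def by simp

lemma cyc_prod_Cons_img: "cyc_prod (d#ds) = (\<lambda>(a,as). a#as) ` ({..<d} \<times> cyc_prod ds)"
  unfolding cyc_prod_Cons by auto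

lemma cyc_prod_inj: "inj_on (\<lambda>(a::nat,as::nat list). a#as) A"
  by (auto simp: inj_on_def)

lemma finite_cyc_prod: "finite (cyc_prod ds)"
proof (induction ds)
  case Nil then show ?case by (simp add: cyc_prod_Nil)
next
  case (Cons d ds) then show ?case by (simp add: cyc_prod_Cons_img)
qed

lemma card_cyc_prod: "card (cyc_prod ds) = prod_list ds"
proof (induction ds)
  case Nil then show ?case by (simp add: cyc_prod_Nil)
next
  case (Cons d ds)
  have "card (cyc_prod (d#ds)) = card ({..<d} \<times> cyc_prod ds)"
    unfolding cyc_prod_Cons_img by (rule card_image[OF cyc_prod_inj])
  also have "\<dots> = d * prod_list ds" using Cons by (simp add: card_cartesian_product)
  finally show ?case by simp
qed

lemma sum_cyc_prod_Cons:
  "(\<Sum>j\<in>cyc_prod (d#ds). f j) = (\<Sum>a<d. \<Sum>as\<in>cyc_prod ds. f (a#as))"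
proof -
  have "(\<Sum>j\<in>cyc_prod (d#ds). f j) = (\<Sum>p\<in>{..<d} \<times> cyc_prod ds. f ((\<lambda>(a,as). a#as) p))"
    unfolding cyc_prod_Cons_img by (rule sum.reindex[OF cyc_prod_inj, unfolded comp_def])
  also have "\<dots> = (\<Sum>a<d. \<Sum>as\<in>cyc_prod ds. f (a#as))"
    unfolding sum.cartesian_product by (rule sum.cong) (auto split: prod.splits)
  finally show ?thesis .
qed

lemma digit_eq: fixes d x y :: nat shows "0 < d \<Longrightarrow> x < d \<Longrightarrow> y < d \<Longrightarrow> d dvd (x * (d - 1) + y) \<longleftrightarrow> x = y"
proof -
  assume d: "0 < d" and x: "x < d" and y: "y < d"
  have e: "x * (d - 1) + y + x = d * x + y" using d by (cases d) (auto simp: algebra_simps)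
  have "int (x * (d - 1) + y) + int x = int d * int x + int y"
    using arg_cong[OF e, of int] by simp
  then have "int (x * (d - 1) + y) = int d * int x + (int y - int x)" by linarith
  then have "d dvd (x * (d - 1) + y) \<longleftrightarrow> int d dvd (int d * int x + (int y - int x))"
    by (metis of_nat_dvd_iff)
  also have "\<dots> \<longleftrightarrow> int d dvd (int y - int x)" by (rule dvd_add_right_iff) simp
  also have "\<dots> \<longleftrightarrow> x = y"
  proof
    assume "int d dvd int y - int x"
    then obtain k where k: "int y - int x = int d * k" by (auto elim: dvdE)
    have "\<bar>int y - int x\<bar> < int d" using x y by auto
    have "k = 0"
    proof (rule ccontr)
      assume "k \<noteq> 0"
      then have "1 \<le> \<bar>k\<bar>" by simp
      then have "int d * 1 \<le> int d * \<bar>k\<bar>" by (rule mult_left_mono) simp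
      moreover have "int d * \<bar>k\<bar> = \<bar>int y - int x\<bar>" using k by (simp add: abs_mult)
      ultimately show False using \<open>\<bar>int y - int x\<bar> < int d\<close> by simp
    qed
    then show "x = y" using k by simp
  qed simp
  finally show ?thesis .
qed

lemma fourier_orth:
  "\<forall>d\<in>set ds. 0 < d \<Longrightarrow> x \<in> cyc_prod ds \<Longrightarrow> y \<in> cyc_prod ds \<Longrightarrow>
   (\<Sum>j\<in>cyc_prod ds. cnj (fchar ds j x) * fchar ds j y) = (if x = y then of_nat (prod_list ds) else 0)"
proof (induction ds arbitrary: x y)
  case Nil then show ?case by (simp add: cyc_prod_Nil fchar_Nil)
next
  case (Cons d ds)
  obtain a as where x: "x = a#as" "a < d" "as \<in> cyc_prod ds" using Cons.prems(2) unfolding cyc_prod_Cons by blast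
  obtain b bs where y: "y = b#bs" "b < d" "bs \<in> cyc_prod ds" using Cons.prems(3) unfolding cyc_prod_Cons by blast
  have d: "0 < d" using Cons.prems(1) by simp
  have IH: "(\<Sum>j\<in>cyc_prod ds. cnj (fchar ds j as) * fchar ds j bs) = (if as = bs then of_nat (prod_list ds) else 0)"
    using Cons x y by simp
  have "(\<Sum>j\<in>cyc_prod (d#ds). cnj (fchar (d#ds) j x) * fchar (d#ds) j y)
      = (\<Sum>c<d. \<Sum>cs\<in>cyc_prod ds. (cnj (ee d (c * a)) * ee d (c * b)) * (cnj (fchar ds cs as) * fchar ds cs bs))"
    unfolding sum_cyc_prod_Cons x(1) y(1) fchar_Cons by (simp add: mult_ac)
  also have "\<dots> = (\<Sum>c<d. cnj (ee d (c * a)) * ee d (c * b)) * (\<Sum>cs\<in>cyc_prod ds. cnj (fchar ds cs as) * fchar ds cs bs)"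
    by (rule sum_product[symmetric])
  also have "(\<Sum>c<d. cnj (ee d (c * a)) * ee d (c * b)) = (\<Sum>c<d. ee d (c * (a * (d - 1) + b)))"
    using d by (simp add: ee_cnj ee_add[symmetric] algebra_simps)
  also have "\<dots> = (if a = b then of_nat d else 0)"
    using ee_sum[OF d] digit_eq[OF d x(2) y(2)] by simp
  finally show ?case using IH x y by auto
qed

lemma fourier_prod:
  "\<forall>d\<in>set ds. 0 < d \<Longrightarrow> x \<in> cyc_prod ds \<Longrightarrow> y \<in> cyc_prod ds \<Longrightarrow> j \<in> cyc_prod ds \<Longrightarrow>
   fchar ds j x * fchar ds j y = fchar ds j (addv ds x y)"
proof (induction ds arbitrary: x y j)
  case Nil then show ?case by (simp add: fchar_Nil)
next
  case (Cons d ds)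
  obtain a as where x: "x = a#as" "a < d" "as \<in> cyc_prod ds" using Cons.prems(2) unfolding cyc_prod_Cons by blast
  obtain b bs where y: "y = b#bs" "b < d" "bs \<in> cyc_prod ds" using Cons.prems(3) unfolding cyc_prod_Cons by blast
  obtain c cs where j: "j = c#cs" "c < d" "cs \<in> cyc_prod ds" using Cons.prems(4) unfolding cyc_prod_Cons by blast
  have d: "0 < d" using Cons.prems(1) by simp
  have IH: "fchar ds cs as * fchar ds cs bs = fchar ds cs (addv ds as bs)" using Cons x y j by simp
  have "ee d (c * a) * ee d (c * b) = ee d (c * ((a + b) mod d))"
  proof -
    have "ee d (c * a) * ee d (c * b) = ee d (c * (a + b))" by (simp add: ee_add[symmetric] algebra_simps)
    also have "\<dots> = ee d (c * ((a + b) mod d))"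
      using ee_mod[OF d, of "c * (a + b)"] ee_mod[OF d, of "c * ((a + b) mod d)"]
      by (metis mod_mult_right_eq)
    finally show ?thesis .
  qed
  then show ?case using IH x y j by (simp add: fchar_Cons mult_ac)
qed

lemma size2: "size M = 2 \<Longrightarrow> \<exists>a b. M = {#a, b#}"
proof -
  assume s: "size M = 2"
  obtain a N where aN: "M = add_mset a N" using size_eq_Suc_imp_eq_union[of M 1] s by auto
  then have "size N = 1" using s by simp
  then obtain b where "N = {#b#}" using size_1_singleton_mset by blast
  then show ?thesis using aN by blast
qed

lemma image_mset_inv: "(\<forall>x\<in>#M. g (f x) = x) \<Longrightarrow> image_mset g (image_mset f M) = M"
  by (induction M) auto

lemma rowprod2: "rowprod c {#a, b#} = (\<lambda>t. c a t * c b t)"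
  unfolding rowprod_def by (simp add: mult.commute)

theorem mainTheorem11:
  fixes n :: nat and H :: "nat \<Rightarrow> nat \<Rightarrow> complex"
  assumes "0 < n"
    and "\<forall>a<n. \<forall>t<n. norm (H a t) = 1"
    and "\<forall>a<n. \<forall>b<n. a \<noteq> b \<longrightarrow> cinner {..<n} (H a) (H b) = 0"
    and "\<forall>t<n. H 0 t = 1"
    and "\<forall>a<n. \<forall>b<n. \<exists>!c. c < n \<and>
           cinner {..<n} (\<lambda>t. H a t * H b t) (H c) \<noteq> 0"
  shows "\<exists>ds :: nat list. (\<forall>d\<in>set ds. 0 < d) \<and> prod_list ds = n \<and>
          (\<exists>\<phi> :: nat \<Rightarrow> nat list. bij_betw \<phi> {..<n} (cyc_prod ds) \<and>
             Lgraph_iso {..<n} {..<n} H (cyc_prod ds) (cyc_prod ds) (fourier ds)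
                        (image_mset \<phi>))"
proof -
  have hdm: "hadamard n H" unfolding hadamard_def using assms(1-5) by (intro conjI) assumption+
  interpret hd: hadamard n H by (rule hdm)
  define Mg :: "nat monoid" where "Mg = \<lparr>carrier = {..<n}, monoid.mult = hd.mul, monoid.one = 0\<rparr>"
  have cg: "comm_group Mg"
  proof (rule comm_groupI)
    fix x assume "x \<in> carrier Mg"
    then have "x < n" by (simp add: Mg_def)
    then obtain b where "b < n" "hd.mul b x = 0" using hd.mul_inv by blast
    then show "\<exists>y\<in>carrier Mg. y \<otimes>\<^bsub>Mg\<^esub> x = \<one>\<^bsub>Mg\<^esub>" by (auto simp: Mg_def)
  next
    show "\<And>x y. x \<in> carrier Mg \<Longrightarrow> y \<in> carrier Mg \<Longrightarrow> x \<otimes>\<^bsub>Mg\<^esub> y = y \<otimes>\<^bsub>Mg\<^esub> x"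
      by (simp add: Mg_def hd.mul_comm)
  qed (auto simp: Mg_def hd.mul_lt hd.mul_assoc hd.mul_0 hd.n0)
  have fin: "finite (carrier Mg)" by (simp add: Mg_def)
  have sub: "subgroup (carrier Mg) Mg"
    using group.subgroup_self[OF comm_group.axioms(2)[OF cg]] .
  obtain gs ds where st: "length gs = length ds" "set gs \<subseteq> carrier Mg"
     "\<forall>i<length gs. group.ord Mg (gs!i) = ds!i" "\<forall>d\<in>set ds. 0 < d"
     "bij_betw (ev Mg gs) (cyc_prod ds) (carrier Mg)"
    using comm_group.structure_thm[OF cg fin sub] by blast
  have bij: "bij_betw (ev Mg gs) (cyc_prod ds) {..<n}" using st(5) by (simp add: Mg_def)
  have pl: "prod_list ds = n"
    using bij_betw_same_card[OF bij] card_cyc_prod by simp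
  define \<phi> where "\<phi> = the_inv_into (cyc_prod ds) (ev Mg gs)"
  have injev: "inj_on (ev Mg gs) (cyc_prod ds)" using bij bij_betw_def by blast
  have bphi: "bij_betw \<phi> {..<n} (cyc_prod ds)"
    unfolding \<phi>_def using bij_betw_the_inv_into[OF bij] .
  have phi_in: "\<phi> a \<in> cyc_prod ds" if "a < n" for a
    using bij_betwE[OF bphi] that by blast
  have ev_phi: "ev Mg gs (\<phi> a) = a" if "a < n" for a
    unfolding \<phi>_def using f_the_inv_into_f_bij_betw[OF bij] that by simp
  have injphi: "inj_on \<phi> {..<n}" using bphi bij_betw_def by blast
  have hom: "\<phi> (hd.mul a b) = addv ds (\<phi> a) (\<phi> b)" if ab: "a < n" "b < n" for a b
  proof -
    have "ev Mg gs (addv ds (\<phi> a) (\<phi> b)) = ev Mg gs (\<phi> a) \<otimes>\<^bsub>Mg\<^esub> ev Mg gs (\<phi> b)"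
      using comm_group.ev_add[OF cg st(1) st(2) st(3)] .
    also have "\<dots> = hd.mul a b" using ev_phi ab by (simp add: Mg_def)
    finally have e: "ev Mg gs (addv ds (\<phi> a) (\<phi> b)) = hd.mul a b" .
    have "addv ds (\<phi> a) (\<phi> b) \<in> cyc_prod ds" using addv_in[OF st(4)] .
    then have "the_inv_into (cyc_prod ds) (ev Mg gs) (ev Mg gs (addv ds (\<phi> a) (\<phi> b))) = addv ds (\<phi> a) (\<phi> b)"
      by (rule the_inv_into_f_f[OF injev])
    with e show ?thesis unfolding \<phi>_def by simp
  qed
  define \<psi> where "\<psi> = the_inv_into {..<n} \<phi>"
  have psi_phi: "\<psi> (\<phi> a) = a" if "a < n" for a
    unfolding \<psi>_def using the_inv_into_f_f[OF injphi] that by simp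
  have phi_psi: "\<phi> (\<psi> x) = x" if "x \<in> cyc_prod ds" for x
    unfolding \<psi>_def using f_the_inv_into_f_bij_betw[OF bphi] that by simp
  have psi_in: "\<psi> x < n" if "x \<in> cyc_prod ds" for x
  proof -
    have bpsi: "bij_betw \<psi> (cyc_prod ds) {..<n}" unfolding \<psi>_def by (rule bij_betw_the_inv_into[OF bphi])
    show ?thesis using bij_betwE[OF bpsi] that by blast
  qed
  have bimg: "bij_betw (image_mset \<phi>) (Lverts {..<n}) (Lverts (cyc_prod ds))"
  proof (rule bij_betw_byWitness[where f' = "image_mset \<psi>"])
    show "\<forall>M\<in>Lverts {..<n}. image_mset \<psi> (image_mset \<phi> M) = M"
      using psi_phi unfolding Lverts_def by (auto intro!: image_mset_inv)
    show "\<forall>M\<in>Lverts (cyc_prod ds). image_mset \<phi> (image_mset \<psi> M) = M"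
      using phi_psi unfolding Lverts_def by (auto intro!: image_mset_inv)
    show "image_mset \<phi> ` Lverts {..<n} \<subseteq> Lverts (cyc_prod ds)"
      using phi_in unfolding Lverts_def by (auto simp: subset_iff)
    show "image_mset \<psi> ` Lverts (cyc_prod ds) \<subseteq> Lverts {..<n}"
      using psi_in unfolding Lverts_def by (auto simp: subset_iff)
  qed
  have injimg: "inj_on (image_mset \<phi>) (Lverts {..<n})" using bimg bij_betw_def by blast
  have fprod: "rowprod (fourier ds) {#x, y#} t = fchar ds t (addv ds x y)"
    if "x \<in> cyc_prod ds" "y \<in> cyc_prod ds" "t \<in> cyc_prod ds" for x y t
    unfolding rowprod2 fourier_def using fourier_prod[OF st(4) that] by simp
  have finner: "cinner (cyc_prod ds) (rowprod (fourier ds) {#x, y#}) (rowprod (fourier ds) {#u, v#}) = 0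
       \<longleftrightarrow> addv ds x y \<noteq> addv ds u v"
    if xy: "x \<in> cyc_prod ds" "y \<in> cyc_prod ds" "u \<in> cyc_prod ds" "v \<in> cyc_prod ds" for x y u v
  proof -
    have "cinner (cyc_prod ds) (rowprod (fourier ds) {#x, y#}) (rowprod (fourier ds) {#u, v#})
        = (\<Sum>t\<in>cyc_prod ds. cnj (fchar ds t (addv ds x y)) * fchar ds t (addv ds u v))"
      unfolding cinner_def by (rule sum.cong) (simp_all add: fprod xy)
    also have "\<dots> = (if addv ds x y = addv ds u v then of_nat (prod_list ds) else 0)"
      using fourier_orth[OF st(4) addv_in[OF st(4)] addv_in[OF st(4)]] .
    finally show ?thesis using pl hd.n0 by simp
  qed
  have adj: "Ladj {..<n} H M N \<longleftrightarrow> Ladj (cyc_prod ds) (fourier ds) (image_mset \<phi> M) (image_mset \<phi> N)"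
    if M: "M \<in> Lverts {..<n}" and N: "N \<in> Lverts {..<n}" for M N
  proof -
    obtain i j where ij: "M = {#i, j#}" using M size2 unfolding Lverts_def by blast
    obtain k l where kl: "N = {#k, l#}" using N size2 unfolding Lverts_def by blast
    have ijn: "i < n" "j < n" using M ij unfolding Lverts_def by auto
    have kln: "k < n" "l < n" using N kl unfolding Lverts_def by auto
    have neq: "image_mset \<phi> M \<noteq> image_mset \<phi> N \<longleftrightarrow> M \<noteq> N"
      using inj_on_eq_iff[OF injimg M N] by simp
    have "Ladj {..<n} H M N \<longleftrightarrow> M \<noteq> N \<and> hd.mul i j \<noteq> hd.mul k l"
      unfolding Ladj_def ij kl rowprod2 using hd.prod_inner[OF ijn kln] by simp
    also have "hd.mul i j \<noteq> hd.mul k l \<longleftrightarrow> \<phi> (hd.mul i j) \<noteq> \<phi> (hd.mul k l)"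
      using inj_on_eq_iff[OF injphi] hd.mul_lt ijn kln by simp
    also have "\<dots> \<longleftrightarrow> addv ds (\<phi> i) (\<phi> j) \<noteq> addv ds (\<phi> k) (\<phi> l)"
      using hom ijn kln by simp
    also have "\<dots> \<longleftrightarrow> cinner (cyc_prod ds) (rowprod (fourier ds) {#\<phi> i, \<phi> j#}) (rowprod (fourier ds) {#\<phi> k, \<phi> l#}) = 0"
      using finner phi_in ijn kln by simp
    finally show ?thesis unfolding Ladj_def using neq ij kl by simp
  qed
  show ?thesis
  proof (intro exI[of _ ds] conjI exI[of _ \<phi>])
    show "\<forall>d\<in>set ds. 0 < d" using st(4) .
    show "prod_list ds = n" by (rule pl)
    show "bij_betw \<phi> {..<n} (cyc_prod ds)" by (rule bphi)
    show "Lgraph_iso {..<n} {..<n} H (cyc_prod ds) (cyc_prod ds) (fourier ds) (image_mset \<phi>)"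
      unfolding Lgraph_iso_def using bimg adj by blast
  qed
qed

end
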